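(* Let $R=k[x_1,x_2,x_3]$ and let $A=R/I$ be an Artinian algebra with $h$-vector $(1,3,h_2,\ldots,h_s)$ and socle degree $s$. If $h_{d-1}-h_d=2(h_d-h_{d+1})>0$ for some $d$ with $r_1(A)<d<s$, then $A$ is not level.
   Context: $k$ is an infinite field of characteristic $0$; $h_i=\dim_kA_i$, $A_s\neq0$. $A$ is level if its socle $\{a\in A:a\mathfrak m=0\}$ ($\mathfrak m$ the maximal homogeneous ideal) is concentrated in a single degree. $r_1(A)=\min\{\ell:(R/(I+(L)))_{\ell+1}=0\}$ for a general linear form $L$ (equivalently $\min\{\ell: x_2^{\ell+1}\in\mathrm{Gin}(I)\}$, generic initial ideal for degree reverse lexicographic order). *)

theory Defs
  imports Complex_Main "HOL-Library.Poly_Mapping" "HOL-Library.Product_Plus"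
begin

text \<open>Monomials in x1,x2,x3 are exponent triples; polynomials of R = k[x1,x2,x3]
  are finitely supported maps from monomials to coefficients.\<close>

type_synonym mono3 = "nat \<times> nat \<times> nat"
type_synonym 'a poly3 = "mono3 \<Rightarrow>\<^sub>0 'a"

definition mdeg :: "mono3 \<Rightarrow> nat" where
  "mdeg m = fst m + fst (snd m) + snd (snd m)"

definition X1 :: "'a::comm_ring_1 poly3" where "X1 = Poly_Mapping.single (1,0,0) 1"
definition X2 :: "'a::comm_ring_1 poly3" where "X2 = Poly_Mapping.single (0,1,0) 1"
definition X3 :: "'a::comm_ring_1 poly3" where "X3 = Poly_Mapping.single (0,0,1) 1"

definition sc :: "'a::comm_ring_1 \<Rightarrow> 'a poly3 \<Rightarrow> 'a poly3" where
  "sc c p = Poly_Mapping.single 0 c * p"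

lemma vs_sc: "vector_space (sc :: 'a::field \<Rightarrow> 'a poly3 \<Rightarrow> 'a poly3)"
proof unfold_locales
  fix a b :: 'a and x y :: "'a poly3"
  show "sc a (x + y) = sc a x + sc a y" by (simp add: sc_def distrib_left)
  show "sc (a + b) x = sc a x + sc b x" by (simp add: sc_def single_add distrib_right)
  show "sc a (sc b x) = sc (a * b) x"
    by (simp add: sc_def mult.assoc[symmetric] mult_single)
  show "sc 1 x = x" by (simp add: sc_def flip: one_poly_mapping.abs_eq)
qed

definition homog :: "nat \<Rightarrow> 'a::comm_ring_1 poly3 set" where
  "homog j = {p. \<forall>m\<in>Poly_Mapping.keys p. mdeg m = j}"

definition hcomp :: "nat \<Rightarrow> 'a::comm_ring_1 poly3 \<Rightarrow> 'a poly3" where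
  "hcomp t p = (\<Sum>m\<in>{m\<in>Poly_Mapping.keys p. mdeg m = t}. Poly_Mapping.single m (Poly_Mapping.lookup p m))"

definition is_ideal :: "'a::comm_ring_1 poly3 set \<Rightarrow> bool" where
  "is_ideal I \<longleftrightarrow> 0 \<in> I \<and> (\<forall>p\<in>I. \<forall>q\<in>I. p + q \<in> I) \<and> (\<forall>r. \<forall>p\<in>I. r * p \<in> I)"

definition homogeneous_ideal :: "'a::comm_ring_1 poly3 set \<Rightarrow> bool" where
  "homogeneous_ideal I \<longleftrightarrow> is_ideal I \<and> (\<forall>p\<in>I. \<forall>t. hcomp t p \<in> I)"

text \<open>h_j = dim_k (R/I)_j = dim_k R_j - dim_k I_j.\<close>
definition hfun :: "'a::field poly3 set \<Rightarrow> nat \<Rightarrow> nat" where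
  "hfun I j = vector_space.dim sc (homog j :: 'a poly3 set) - vector_space.dim sc (homog j \<inter> I)"

text \<open>A = R/I is Artinian: A_j = 0 for all large j.\<close>
definition artinian :: "'a::field poly3 set \<Rightarrow> bool" where
  "artinian I \<longleftrightarrow> (\<exists>N. \<forall>j\<ge>N. homog j \<subseteq> I)"

text \<open>Level: the socle {f + I : f x_i \<in> I for i = 1,2,3} lies in a single degree t.\<close>
definition level :: "'a::field poly3 set \<Rightarrow> bool" where
  "level I \<longleftrightarrow> (\<exists>t. \<forall>f. (X1 * f \<in> I \<and> X2 * f \<in> I \<and> X3 * f \<in> I) \<longrightarrow> f - hcomp t f \<in> I)"

definition linform :: "'a::field \<times> 'a \<times> 'a \<Rightarrow> 'a poly3" where
  "linform c = sc (fst c) X1 + sc (fst (snd c)) X2 + sc (snd (snd c)) X3"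

text \<open>(R/(I+(L)))_j = 0, where I + (L) = {i + L r}.\<close>
definition quot_vanishes :: "'a::field poly3 set \<Rightarrow> 'a poly3 \<Rightarrow> nat \<Rightarrow> bool" where
  "quot_vanishes I L j \<longleftrightarrow> homog j \<subseteq> {i + L * r | i r. i \<in> I}"

definition rL :: "'a::field poly3 set \<Rightarrow> 'a \<times> 'a \<times> 'a \<Rightarrow> nat" where
  "rL I c = (LEAST l. quot_vanishes I (linform c) (Suc l))"

definition peval :: "'a::field poly3 \<Rightarrow> 'a \<times> 'a \<times> 'a \<Rightarrow> 'a" where
  "peval F c = (\<Sum>m\<in>Poly_Mapping.keys F. Poly_Mapping.lookup F m * fst c ^ fst m * fst (snd c) ^ fst (snd m)
                                * snd (snd c) ^ snd (snd m))"

text \<open>A property holds for a general point of k^3 if it holds on a nonempty Zariski open set.\<close>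
definition general :: "('a::field \<times> 'a \<times> 'a \<Rightarrow> bool) \<Rightarrow> bool" where
  "general P \<longleftrightarrow> (\<exists>F. F \<noteq> 0 \<and> (\<forall>c. peval F c \<noteq> 0 \<longrightarrow> P c))"

definition r1 :: "'a::field poly3 set \<Rightarrow> nat" where
  "r1 I = (THE r. general (\<lambda>c. rL I c = r))"

end

theory Submission
  imports Defs "HOL-Library.Product_Lexorder" "Jordan_Normal_Form.Determinant"
begin

instance prod :: (ordered_cancel_comm_monoid_add, ordered_cancel_comm_monoid_add) ordered_cancel_comm_monoid_add
proof
  fix a b c :: "'a \<times> 'b"
  assume "a \<le> b" then show "c + a \<le> c + b"
    by (cases a; cases b; cases c) (auto simp: less_eq_prod_def less_le add_left_cancel intro: add_strict_left_mono add_left_mono)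
qed

lemma mdeg_add[simp]: "mdeg (a + b) = mdeg a + mdeg b"
  by (cases a; cases b) (auto simp: mdeg_def)

lemma lookup_hcomp: "Poly_Mapping.lookup (hcomp t p) m = (if mdeg m = t then Poly_Mapping.lookup p m else 0)"
proof -
  have "Poly_Mapping.lookup (hcomp t p) m =
     (\<Sum>x\<in>{m\<in>Poly_Mapping.keys p. mdeg m = t}. (Poly_Mapping.lookup p x when x = m))"
    unfolding hcomp_def lookup_sum lookup_single by simp
  also have "\<dots> = (if m \<in> {m\<in>Poly_Mapping.keys p. mdeg m = t} then Poly_Mapping.lookup p m else 0)"
    by (simp add: when_def sum.delta)
  also have "\<dots> = (if mdeg m = t then Poly_Mapping.lookup p m else 0)"
    by (auto simp: in_keys_iff)
  finally show ?thesis .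
qed

lemma hcomp_add: "hcomp t (p + q) = hcomp t p + hcomp t q"
  by (rule poly_mapping_eqI) (simp add: lookup_hcomp lookup_add)

lemma hcomp_zero[simp]: "hcomp t 0 = 0"
  by (rule poly_mapping_eqI) (simp add: lookup_hcomp)

lemma hcomp_sum: "hcomp t (sum f S) = (\<Sum>x\<in>S. hcomp t (f x))"
  by (rule poly_mapping_eqI) (simp add: lookup_hcomp lookup_sum)

lemma hcomp_minus: "hcomp t (p - q) = hcomp t p - hcomp t q"
  by (rule poly_mapping_eqI) (simp add: lookup_hcomp lookup_minus)

lemma lookup_sc: "Poly_Mapping.lookup (sc a p) m = a * Poly_Mapping.lookup p m"
  by (simp add: sc_def flip: mult_map_scale_conv_mult) (simp add: Poly_Mapping.map.rep_eq when_def)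

lemma hcomp_sc: "hcomp t (sc a p) = sc a (hcomp t p)"
  by (rule poly_mapping_eqI) (simp add: lookup_hcomp lookup_sc)

lemma homog_iff: "p \<in> homog j \<longleftrightarrow> (\<forall>m. Poly_Mapping.lookup p m \<noteq> 0 \<longrightarrow> mdeg m = j)"
  by (auto simp: homog_def in_keys_iff)

lemma hcomp_homog: "hcomp t p \<in> homog t"
  by (auto simp: homog_iff lookup_hcomp split: if_splits)

lemma hcomp_self: "p \<in> homog t \<Longrightarrow> hcomp t p = p"
  by (rule poly_mapping_eqI) (auto simp: lookup_hcomp homog_iff)

lemma hcomp_other: "p \<in> homog t' \<Longrightarrow> t \<noteq> t' \<Longrightarrow> hcomp t p = 0"
  by (rule poly_mapping_eqI) (auto simp: lookup_hcomp homog_iff)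

lemma hcomp_decomp: "p = (\<Sum>t\<in>mdeg ` Poly_Mapping.keys p. hcomp t p)"
proof (rule poly_mapping_eqI)
  fix m
  have "Poly_Mapping.lookup (\<Sum>t\<in>mdeg ` Poly_Mapping.keys p. hcomp t p) m
     = (\<Sum>t\<in>mdeg ` Poly_Mapping.keys p. if mdeg m = t then Poly_Mapping.lookup p m else 0)"
    by (simp add: lookup_sum lookup_hcomp)
  also have "\<dots> = (if mdeg m \<in> mdeg ` Poly_Mapping.keys p then Poly_Mapping.lookup p m else 0)"
    by (simp add: sum.delta eq_commute[of "mdeg m"])
  also have "\<dots> = Poly_Mapping.lookup p m"
    by (auto simp: in_keys_iff)
  finally show "Poly_Mapping.lookup p m = Poly_Mapping.lookup (\<Sum>t\<in>mdeg ` Poly_Mapping.keys p. hcomp t p) m" by simp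
qed

lemma homog_mult: "p \<in> homog i \<Longrightarrow> q \<in> homog j \<Longrightarrow> p * q \<in> homog (i + j)"
proof -
  assume hp: "p \<in> homog i" and hq: "q \<in> homog j"
  show ?thesis unfolding homog_def
  proof (intro CollectI ballI)
    fix m assume "m \<in> Poly_Mapping.keys (p * q)"
    then obtain a b where "m = a + b" "a \<in> Poly_Mapping.keys p" "b \<in> Poly_Mapping.keys q"
      using keys_mult[of p q] by blast
    thus "mdeg m = i + j" using hp hq by (simp add: homog_def)
  qed
qed

lemma homog_add: "p \<in> homog i \<Longrightarrow> q \<in> homog i \<Longrightarrow> p + q \<in> homog i"
  unfolding homog_iff lookup_add by (metis add.left_neutral add.right_neutral)

lemma homog_zero[simp]: "0 \<in> homog i"
  by (auto simp: homog_iff)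

lemma homog_sc: "p \<in> homog i \<Longrightarrow> sc a p \<in> homog i"
  unfolding homog_iff lookup_sc by (metis mult_zero_right)

lemma homog_minus: "p \<in> homog i \<Longrightarrow> q \<in> homog i \<Longrightarrow> p - q \<in> homog i"
  unfolding homog_iff lookup_minus by (metis diff_zero diff_self)

lemma homog_sum: "(\<And>x. x \<in> S \<Longrightarrow> f x \<in> homog i) \<Longrightarrow> sum f S \<in> homog i"
  by (induction S rule: infinite_finite_induct) (auto intro: homog_add)

lemma hcomp_mult_homog:
  assumes q: "q \<in> homog i"
  shows "hcomp (i + t) (q * p) = q * hcomp t p"
proof -
  let ?D = "mdeg ` Poly_Mapping.keys p"
  have "q * p = (\<Sum>t'\<in>?D. q * hcomp t' p)"
    by (subst hcomp_decomp[of p]) (simp add: sum_distrib_left)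
  hence "hcomp (i + t) (q * p) = (\<Sum>t'\<in>?D. hcomp (i + t) (q * hcomp t' p))"
    by (simp add: hcomp_sum)
  also have "\<dots> = (\<Sum>t'\<in>?D. if t' = t then q * hcomp t p else 0)"
  proof (rule sum.cong)
    fix t' assume "t' \<in> ?D"
    have h: "q * hcomp t' p \<in> homog (i + t')" by (rule homog_mult[OF q hcomp_homog])
    show "hcomp (i + t) (q * hcomp t' p) = (if t' = t then q * hcomp t p else 0)"
      using hcomp_self[OF h] hcomp_other[OF h] by auto
  qed simp
  also have "\<dots> = (if t \<in> ?D then q * hcomp t p else 0)"
    by (simp add: sum.delta')
  also have "\<dots> = q * hcomp t p"
  proof -
    have "t \<notin> ?D \<Longrightarrow> hcomp t p = 0"
      by (rule poly_mapping_eqI) (auto simp: lookup_hcomp in_keys_iff)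
    thus ?thesis by auto
  qed
  finally show ?thesis .
qed

lemma X_homog: "X1 \<in> homog 1" "X2 \<in> homog 1" "X3 \<in> homog 1"
  by (auto simp: homog_def X1_def X2_def X3_def mdeg_def)

lemma linform_homog: "linform c \<in> homog 1"
  unfolding linform_def by (intro homog_add homog_sc X_homog)


context vector_space
begin

lemma indep_disjoint_span_inter:
  assumes "independent (A \<union> C)" "A \<inter> C = {}" "v \<in> span A" "v \<in> span C"
  shows "v = 0"
proof -
  have iA: "independent A" and iC: "independent C"
    using assms(1) by (auto intro: dependent_mono)
  have rA: "representation (A \<union> C) v = representation A v"
    by (rule representation_extend[OF assms(1) assms(3)]) auto
  have rC: "representation (A \<union> C) v = representation C v"
    by (rule representation_extend[OF assms(1) assms(4)]) auto
  have "representation A v b = 0" for b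
  proof (rule ccontr)
    assume "representation A v b \<noteq> 0"
    hence "b \<in> A" "b \<in> C" using representation_ne_zero[of A v b] representation_ne_zero[of C v b] rA rC by auto
    thus False using assms(2) by auto
  qed
  hence "{b. representation A v b \<noteq> 0} = {}" by auto
  thus ?thesis using sum_nonzero_representation_eq[OF iA assms(3)] by simp
qed

lemma indep_union:
  assumes iA: "independent A" and iC: "independent C"
    and disj: "\<And>v. v \<in> span A \<Longrightarrow> v \<in> span C \<Longrightarrow> v = 0"
  shows "independent (A \<union> C)" "A \<inter> C = {}"
proof -
  show "A \<inter> C = {}"
  proof safe
    fix a assume "a \<in> A" "a \<in> C"
    hence "a = 0" using disj span_base by blast
    thus "a \<in> {}" using \<open>a \<in> A\<close> iA dependent_zero by blast
  qed
  show "independent (A \<union> C)"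
    unfolding dependent_def
  proof -
    { fix a assume aU: "a \<in> A \<union> C" and sp: "a \<in> span (A \<union> C - {a})"
    have False
    proof (cases "a \<in> A")
      case True
      have "a \<notin> C" using \<open>A \<inter> C = {}\<close> True by auto
      hence "A \<union> C - {a} = (A - {a}) \<union> C" by auto
      with sp obtain x y where xy: "a = x + y" "x \<in> span (A - {a})" "y \<in> span C"
        using span_Un by auto
      have "y = a - x" using xy by simp
      moreover have "a - x \<in> span A"
        using True xy(2) span_mono[of "A - {a}" A] by (auto intro: span_diff span_base)
      ultimately have "y \<in> span A" by simp
      hence "y = 0" using disj xy(3) by blast
      hence "a \<in> span (A - {a})" using xy by simp
      thus False using True iA dependent_def by blast
    next
      case False
      hence aC: "a \<in> C" using aU by auto
      hence "A \<union> C - {a} = A \<union> (C - {a})" using False by auto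
      with sp obtain x y where xy: "a = x + y" "x \<in> span A" "y \<in> span (C - {a})"
        using span_Un by auto
      have "x = a - y" using xy by simp
      moreover have "a - y \<in> span C"
        using aC xy(3) span_mono[of "C - {a}" C] by (auto intro: span_diff span_base)
      ultimately have "x \<in> span C" by simp
      hence "x = 0" using disj xy(2) by blast
      hence "a \<in> span (C - {a})" using xy by simp
      thus False using aC iC dependent_def by blast
    qed }
    thus "\<not> (\<exists>a\<in>A \<union> C. a \<in> span (A \<union> C - {a}))" by blast
  qed
qed

lemma fd_basis:
  assumes "finite F" "V \<subseteq> span F"
  obtains B where "finite B" "B \<subseteq> V" "independent B" "V \<subseteq> span B" "card B = dim V"
proof -
  obtain B where B: "B \<subseteq> V" "independent B" "V \<subseteq> span B"
    using maximal_independent_subset[of V] by blast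
  have "finite B" using independent_span_bound[OF assms(1) B(2)] B(1) assms(2) by auto
  moreover have "card B = dim V" using basis_card_eq_dim[OF B(1) B(3) B(2)] .
  ultimately show ?thesis using that B by blast
qed

lemma indep_card_le_dim:
  assumes "finite F" "V \<subseteq> span F" "independent B" "B \<subseteq> V"
  shows "finite B \<and> card B \<le> dim V"
proof -
  obtain D where D: "finite D" "D \<subseteq> V" "independent D" "V \<subseteq> span D" "card D = dim V"
    using fd_basis[OF assms(1,2)] by blast
  from independent_span_bound[OF D(1) assms(3)] assms(4) D(4) D(5) show ?thesis by auto
qed

lemma dim_mono_fd:
  assumes "finite F" "T \<subseteq> span F" "S \<subseteq> T"
  shows "dim S \<le> dim T"
proof -
  obtain B where B: "finite B" "B \<subseteq> S" "independent B" "S \<subseteq> span B" "card B = dim S"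
    using fd_basis[of F S] assms by blast
  show ?thesis using indep_card_le_dim[OF assms(1,2) B(3)] B assms(3) by auto
qed

lemma dim_eq_subspace:
  assumes "finite F" "T \<subseteq> span F" "S \<subseteq> T" "subspace S" "dim T \<le> dim S"
  shows "S = T"
proof -
  obtain B where B: "finite B" "B \<subseteq> S" "independent B" "S \<subseteq> span B" "card B = dim S"
    using fd_basis[of F S] assms by blast
  have "T \<subseteq> span B"
  proof
    fix t assume t: "t \<in> T"
    show "t \<in> span B"
    proof (rule ccontr)
      assume nt: "t \<notin> span B"
      have "independent (insert t B)" using independent_insertI[OF nt B(3)] .
      moreover have "insert t B \<subseteq> T" using t B(2) assms(3) by auto
      ultimately have "card (insert t B) \<le> dim T" using indep_card_le_dim[OF assms(1,2)] by blast
      moreover have "t \<notin> B" using nt span_base by blast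
      ultimately show False using B(1,5) assms(5) by simp
    qed
  qed
  moreover have "span B \<subseteq> S" using span_minimal[OF B(2) assms(4)] .
  ultimately show ?thesis using assms(3) by auto
qed

lemma dim_rel_le:
  assumes F: "finite F" "W \<subseteq> span F" and UW: "U \<subseteq> W"
    and sU: "subspace U" and sW: "subspace W" and sJ: "subspace J"
  shows "dim U + dim (W \<inter> J) \<le> dim W + dim (U \<inter> J)"
    and "W \<subseteq> {u + j |u j. u \<in> U \<and> j \<in> J} \<Longrightarrow> dim U + dim (W \<inter> J) = dim W + dim (U \<inter> J)"
proof -
  have FU: "U \<inter> J \<subseteq> span F" "U \<subseteq> span F" "W \<inter> J \<subseteq> span F" using F UW by auto
  obtain B0 where B0: "finite B0" "B0 \<subseteq> U \<inter> J" "independent B0" "U \<inter> J \<subseteq> span B0" "card B0 = dim (U \<inter> J)"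
    using fd_basis[OF F(1) FU(1)] by blast
  obtain B where B: "B0 \<subseteq> B" "B \<subseteq> U" "independent B" "U \<subseteq> span B"
    using maximal_independent_subset_extend[of B0 U] B0 by blast
  have finB: "finite B" "card B = dim U"
    using indep_card_le_dim[OF F(1) FU(2) B(3) B(2)] basis_card_eq_dim[OF B(2) B(4) B(3)] by auto
  obtain C where C: "finite C" "C \<subseteq> W \<inter> J" "independent C" "W \<inter> J \<subseteq> span C" "card C = dim (W \<inter> J)"
    using fd_basis[OF F(1) FU(3)] by blast
  define B1 where "B1 = B - B0"
  have iB1: "independent B1" using B(3) unfolding B1_def by (auto intro: dependent_mono)
  have B01: "B = B0 \<union> B1" "B0 \<inter> B1 = {}" using B(1) unfolding B1_def by auto
  have spB1U: "span B1 \<subseteq> U" using span_minimal[of B1 U] B(2) sU unfolding B1_def by auto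
  have spCJ: "span C \<subseteq> W \<inter> J" using span_minimal[OF C(2)] sW sJ subspace_inter by blast
  have disj: "v = 0" if "v \<in> span B1" "v \<in> span C" for v
  proof -
    have "v \<in> U \<inter> J" using that spB1U spCJ by auto
    hence "v \<in> span B0" using B0(4) by auto
    thus ?thesis using indep_disjoint_span_inter[of B0 B1 v] B(3) B01 that(1) by auto
  qed
  have iU: "independent (B1 \<union> C)" "B1 \<inter> C = {}" using indep_union[OF iB1 C(3) disj] by auto
  have sub: "B1 \<union> C \<subseteq> W" using B(2) UW C(2) unfolding B1_def by auto
  have finB1: "finite B1" using finB unfolding B1_def by auto
  have cardU: "card (B1 \<union> C) = card B1 + card C" using card_Un_disjoint[OF finB1 C(1) iU(2)] .
  have cardB1: "card B1 = card B - card B0" unfolding B1_def using card_Diff_subset[of B0 B] B0(1) B(1) by auto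
  have cB0B: "card B0 \<le> card B" using card_mono[OF finB(1) B(1)] .
  have le: "card (B1 \<union> C) \<le> dim W" using indep_card_le_dim[OF F iU(1) sub] by auto
  show "dim U + dim (W \<inter> J) \<le> dim W + dim (U \<inter> J)"
    using le cardU cardB1 cB0B finB(2) C(5) B0(5) by linarith
  assume Wsum: "W \<subseteq> {u + j |u j. u \<in> U \<and> j \<in> J}"
  have "W \<subseteq> span (B1 \<union> C)"
  proof
    fix w assume w: "w \<in> W"
    then obtain u j where uj: "w = u + j" "u \<in> U" "j \<in> J" using Wsum by auto
    have "u \<in> span (B0 \<union> B1)" using B(4) uj(2) B01(1) by auto
    then obtain x0 x1 where x: "u = x0 + x1" "x0 \<in> span B0" "x1 \<in> span B1" using span_Un by auto
    have x0UJ: "x0 \<in> U \<inter> J" using x(2) span_minimal[of B0 "U \<inter> J"] B0(2) sU sJ subspace_inter by blast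
    have "x0 + j \<in> J" using x0UJ uj(3) sJ by (auto intro: subspace_add)
    moreover have "x0 + j = w - x1" using uj x by (simp add: algebra_simps)
    moreover have "w - x1 \<in> W" using w spB1U x(3) UW sW by (auto intro: subspace_diff)
    ultimately have "x0 + j \<in> span C" using C(4) by auto
    hence "w \<in> {a + b |a b. a \<in> span B1 \<and> b \<in> span C}" using x uj
      by (intro CollectI exI[of _ x1] exI[of _ "x0 + j"]) (auto simp: algebra_simps)
    thus "w \<in> span (B1 \<union> C)" using span_Un by auto
  qed
  hence "card (B1 \<union> C) = dim W" using basis_card_eq_dim[OF sub _ iU(1)] by auto
  thus "dim U + dim (W \<inter> J) = dim W + dim (U \<inter> J)"
    using cardU cardB1 cB0B finB(2) C(5) B0(5) by linarith
qed

end


interpretation vs: vector_space "sc :: 'a::field \<Rightarrow> 'a poly3 \<Rightarrow> 'a poly3"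
  by (rule vs_sc)

lemma sc_single: "sc a (Poly_Mapping.single m 1) = Poly_Mapping.single m a"
  by (simp add: sc_def mult_single)

lemma mult_hom: "module_hom (sc :: 'a::field \<Rightarrow> 'a poly3 \<Rightarrow> 'a poly3) sc (\<lambda>p. q * p)"
proof -
  have m: "Modules.module (sc :: 'a::field \<Rightarrow> 'a poly3 \<Rightarrow> 'a poly3)"
    using vs_sc by (simp add: module_iff_vector_space)
  show ?thesis
    by (rule module_hom.intro[OF m m]) (unfold_locales, auto simp: sc_def distrib_left mult.left_commute)
qed

lemma dim_mult_image:
  fixes q :: "'a::field poly3"
  assumes q: "q \<noteq> 0" and F: "finite F" "X \<subseteq> vs.span F"
  shows "vs.dim ((\<lambda>p. q * p) ` X) = vs.dim X"
    and "(\<lambda>p. q * p) ` X \<subseteq> vs.span ((\<lambda>p. q * p) ` F)"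
proof -
  interpret h: module_hom "sc :: 'a::field \<Rightarrow> 'a poly3 \<Rightarrow> 'a poly3" sc "\<lambda>p. q * p" by (rule mult_hom)
  let ?g = "\<lambda>p. q * p"
  have inj: "inj ?g" using q by (auto intro: injI)
  obtain B where B: "finite B" "B \<subseteq> X" "vs.independent B" "X \<subseteq> vs.span B" "card B = vs.dim X"
    using vs.fd_basis[OF F] by blast
  have ij: "inj_on ?g (vs.span B)" by (metis inj subset_UNIV inj_on_subset)
  have ind: "vs.independent (?g ` B)"
    using h.independent_injective_image[of B] B(3) ij by auto
  have sp: "?g ` X \<subseteq> vs.span (?g ` B)" using h.span_image[of B] B(4) by auto
  have "card (?g ` B) = vs.dim (?g ` X)"
    by (rule vs.basis_card_eq_dim) (use B(2) sp ind in auto)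
  moreover have "card (?g ` B) = card B" by (metis card_image inj subset_UNIV inj_on_subset)
  ultimately show "vs.dim (?g ` X) = vs.dim X" using B(5) by simp
  show "?g ` X \<subseteq> vs.span (?g ` F)" using h.span_image[of F] F(2) by auto
qed

definition Mon :: "nat \<Rightarrow> 'a::field poly3 set" where
  "Mon j = (\<lambda>m. Poly_Mapping.single m 1) ` {m. mdeg m = j}"

lemma finite_Mon: "finite (Mon j)"
proof -
  have "{m. mdeg m = j} \<subseteq> {0..j} \<times> {0..j} \<times> {0..j}"
    by (auto simp: mdeg_def)
  hence "finite {m. mdeg m = j}" by (rule finite_subset) auto
  thus ?thesis unfolding Mon_def by simp
qed

lemma poly_expand: "p = (\<Sum>m\<in>Poly_Mapping.keys p. Poly_Mapping.single m (Poly_Mapping.lookup p m))"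
proof (rule poly_mapping_eqI)
  fix k
  show "Poly_Mapping.lookup p k = Poly_Mapping.lookup (\<Sum>m\<in>Poly_Mapping.keys p. Poly_Mapping.single m (Poly_Mapping.lookup p m)) k"
    by (simp add: lookup_sum lookup_single when_def sum.delta in_keys_iff)
qed

lemma homog_span: "homog j \<subseteq> vs.span (Mon j)"
proof
  fix p :: "'a poly3" assume p: "p \<in> homog j"
  have "p = (\<Sum>m\<in>Poly_Mapping.keys p. sc (Poly_Mapping.lookup p m) (Poly_Mapping.single m 1))"
    by (subst poly_expand) (simp add: sc_single)
  also have "\<dots> \<in> vs.span (Mon j)"
    using p by (intro vs.span_sum vs.span_scale vs.span_base) (auto simp: Mon_def homog_def)
  finally show "p \<in> vs.span (Mon j)" .
qed

lemma subspace_homog: "vs.subspace (homog j)"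
  by (auto simp: vs.subspace_def intro: homog_add homog_sc)

lemma ideal_sc: "is_ideal I \<Longrightarrow> p \<in> I \<Longrightarrow> sc c p \<in> I"
  by (simp add: is_ideal_def sc_def)
lemma ideal_add: "is_ideal I \<Longrightarrow> p \<in> I \<Longrightarrow> q \<in> I \<Longrightarrow> p + q \<in> I"
  by (simp add: is_ideal_def)
lemma ideal_mult: "is_ideal I \<Longrightarrow> p \<in> I \<Longrightarrow> r * p \<in> I"
  by (simp add: is_ideal_def)
lemma ideal_zero: "is_ideal I \<Longrightarrow> 0 \<in> I"
  by (simp add: is_ideal_def)
lemma ideal_uminus: "is_ideal I \<Longrightarrow> p \<in> I \<Longrightarrow> - p \<in> I"
  using ideal_mult[of I p "-1"] by simp
lemma ideal_diff: "is_ideal I \<Longrightarrow> p \<in> I \<Longrightarrow> q \<in> I \<Longrightarrow> p - q \<in> I"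
  using ideal_add[of I p "-q"] ideal_uminus[of I q] by simp
lemma ideal_sum: "is_ideal I \<Longrightarrow> (\<And>x. x \<in> S \<Longrightarrow> f x \<in> I) \<Longrightarrow> sum f S \<in> I"
  by (induction S rule: infinite_finite_induct) (auto intro: ideal_add ideal_zero)

lemma subspace_ideal: "is_ideal I \<Longrightarrow> vs.subspace I"
  by (auto simp: vs.subspace_def intro: ideal_add ideal_zero ideal_sc)

lemma subspace_pre:
  assumes "is_ideal I" "vs.subspace V"
  shows "vs.subspace {a \<in> V. q * a \<in> I}"
proof (rule vs.subspaceI)
  show "0 \<in> {a \<in> V. q * a \<in> I}" using assms vs.subspace_0 ideal_zero by auto
  fix x y assume "x \<in> {a \<in> V. q * a \<in> I}" "y \<in> {a \<in> V. q * a \<in> I}"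
  thus "x + y \<in> {a \<in> V. q * a \<in> I}" using assms vs.subspace_add[of V x y] ideal_add[of I]
    by (auto simp: distrib_left)
next
  fix c x assume "x \<in> {a \<in> V. q * a \<in> I}"
  moreover have "q * sc c x = sc c (q * x)" by (simp add: sc_def mult.left_commute)
  ultimately show "sc c x \<in> {a \<in> V. q * a \<in> I}" using assms vs.subspace_scale[of V x c] ideal_sc[of I]
    by auto
qed


definition Kset :: "'a::field poly3 set \<Rightarrow> 'a poly3 \<Rightarrow> nat \<Rightarrow> 'a poly3 set" where
  "Kset I L j = {a \<in> homog j. L * a \<in> I}"

lemma mult_image_subspace:
  "vs.subspace S \<Longrightarrow> vs.subspace ((\<lambda>p. (q::'a::field poly3) * p) ` S)"
proof -
  assume S: "vs.subspace S"
  interpret h: module_hom "sc :: 'a::field \<Rightarrow> 'a poly3 \<Rightarrow> 'a poly3" sc "\<lambda>p. q * p" by (rule mult_hom)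
  show ?thesis using h.subspace_image[OF S] .
qed

lemma subspace_Kset: "is_ideal I \<Longrightarrow> vs.subspace (Kset I L j)"
  unfolding Kset_def by (rule subspace_pre[OF _ subspace_homog])

lemma Kset_homog: "Kset I L j \<subseteq> homog j"
  by (auto simp: Kset_def)

lemma Kset_inter: "is_ideal I \<Longrightarrow> Kset I L j \<inter> I = homog j \<inter> I"
  by (auto simp: Kset_def intro: ideal_mult)

lemma span_sub: "X \<subseteq> homog j \<Longrightarrow> X \<subseteq> vs.span (Mon j)"
  using homog_span by blast

lemma yz_step:
  fixes I :: "'a::field poly3 set" and L y z :: "'a poly3"
  assumes I: "is_ideal I" and L: "L \<in> homog 1"
    and y: "y \<in> homog 1" "y \<noteq> 0" and z: "z \<in> homog 1" "z \<noteq> 0"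
    and soc: "\<And>a. a \<in> homog j \<Longrightarrow> L * a \<in> I \<Longrightarrow> y * a \<in> I \<Longrightarrow> z * a \<in> I \<Longrightarrow> a \<in> I"
    and ineq: "2 * (int (vs.dim (Kset I L (Suc j))) - int (vs.dim (homog (Suc j) \<inter> I)))
                 \<le> int (vs.dim (Kset I L j)) - int (vs.dim (homog j \<inter> I))"
  shows "\<forall>b\<in>Kset I L (Suc j). y * b \<in> I"
proof -
  let ?K0 = "Kset I L j" and ?K1 = "Kset I L (Suc j)"
  let ?I0 = "homog j \<inter> I" and ?I1 = "homog (Suc j) \<inter> I"
  define Py where "Py = {a \<in> ?K0. y * a \<in> I}"
  define S where "S = {b \<in> ?K1. y * b \<in> I}"
  let ?F0 = "Mon j :: 'a poly3 set" and ?F1 = "Mon (Suc j) :: 'a poly3 set"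
  have sI: "vs.subspace I" using subspace_ideal[OF I] .
  have sK0: "vs.subspace ?K0" and sK1: "vs.subspace ?K1" using subspace_Kset[OF I] by auto
  have sPy: "vs.subspace Py" unfolding Py_def by (rule subspace_pre[OF I sK0])
  have sS: "vs.subspace S" unfolding S_def by (rule subspace_pre[OF I sK1])
  have K0sp: "?K0 \<subseteq> vs.span ?F0" by (rule span_sub[OF Kset_homog])
  have K1sp: "?K1 \<subseteq> vs.span ?F1" by (rule span_sub[OF Kset_homog])
  have Pysp: "Py \<subseteq> vs.span ?F0" using K0sp unfolding Py_def by auto
  have I0sp: "?I0 \<subseteq> vs.span ?F0" using span_sub[of ?I0 j] by auto
  have mulK: "q * a \<in> ?K1" if "a \<in> ?K0" "q \<in> homog 1" for a q
  proof -
    have "q * a \<in> homog (Suc j)" using homog_mult[OF that(2)] that(1) Kset_homog by fastforce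
    moreover have "L * (q * a) \<in> I" using that(1) ideal_mult[OF I, of "L * a" q]
      by (auto simp: Kset_def mult.left_commute)
    ultimately show ?thesis by (simp add: Kset_def)
  qed
  define U1 where "U1 = (\<lambda>p. y * p) ` ?K0"
  have U1K1: "U1 \<subseteq> ?K1" unfolding U1_def using mulK y(1) by auto
  have sU1: "vs.subspace U1" unfolding U1_def by (rule mult_image_subspace[OF sK0])
  have dU1: "vs.dim U1 = vs.dim ?K0" unfolding U1_def by (rule dim_mult_image(1)[OF y(2) finite_Mon K0sp])
  have U1I: "U1 \<inter> I = (\<lambda>p. y * p) ` Py" unfolding U1_def Py_def by auto
  have dU1I: "vs.dim (U1 \<inter> I) = vs.dim Py" unfolding U1I by (rule dim_mult_image(1)[OF y(2) finite_Mon Pysp])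
  have step3: "vs.dim U1 + vs.dim (?K1 \<inter> I) \<le> vs.dim ?K1 + vs.dim (U1 \<inter> I)"
    by (rule vs.dim_rel_le(1)[OF finite_Mon K1sp U1K1 sU1 sK1 sI])
  define U2 where "U2 = (\<lambda>p. z * p) ` Py"
  have U2S: "U2 \<subseteq> S"
  proof
    fix b assume "b \<in> U2"
    then obtain a where a: "a \<in> Py" "b = z * a" unfolding U2_def by auto
    have "b \<in> ?K1" using mulK[OF _ z(1)] a unfolding Py_def by auto
    moreover have "y * b \<in> I" using a ideal_mult[OF I, of "y * a" z] unfolding Py_def
      by (auto simp: mult.left_commute)
    ultimately show "b \<in> S" unfolding S_def by auto
  qed
  have Ssp: "S \<subseteq> vs.span ?F1" using K1sp unfolding S_def by auto
  have sU2: "vs.subspace U2" unfolding U2_def by (rule mult_image_subspace[OF sPy])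
  have dU2: "vs.dim U2 = vs.dim Py" unfolding U2_def by (rule dim_mult_image(1)[OF z(2) finite_Mon Pysp])
  have U2I: "U2 \<inter> I = (\<lambda>p. z * p) ` ?I0"
  proof
    show "U2 \<inter> I \<subseteq> (\<lambda>p. z * p) ` ?I0"
    proof
      fix b assume "b \<in> U2 \<inter> I"
      then obtain a where a: "a \<in> Py" "b = z * a" "z * a \<in> I" unfolding U2_def by auto
      have "a \<in> I" using soc[of a] a Kset_homog unfolding Py_def Kset_def by auto
      thus "b \<in> (\<lambda>p. z * p) ` ?I0" using a unfolding Py_def Kset_def by auto
    qed
    show "(\<lambda>p. z * p) ` ?I0 \<subseteq> U2 \<inter> I"
      unfolding U2_def Py_def Kset_def using ideal_mult[OF I] by auto
  qed
  have dU2I: "vs.dim (U2 \<inter> I) = vs.dim ?I0" unfolding U2I by (rule dim_mult_image(1)[OF z(2) finite_Mon I0sp])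
  have SI: "S \<inter> I = ?I1" using Kset_inter[OF I, of L "Suc j"] unfolding S_def using ideal_mult[OF I] by auto
  have step4: "vs.dim U2 + vs.dim (S \<inter> I) \<le> vs.dim S + vs.dim (U2 \<inter> I)"
    by (rule vs.dim_rel_le(1)[OF finite_Mon Ssp U2S sU2 sS sI])
  have K1I: "?K1 \<inter> I = ?I1" by (rule Kset_inter[OF I])
  have e1: "vs.dim (?K1 \<inter> I) = vs.dim ?I1" using K1I by simp
  have e2: "vs.dim (S \<inter> I) = vs.dim ?I1" using SI by simp
  have A: "vs.dim ?K0 + 2 * vs.dim ?I1 \<le> vs.dim ?K1 + vs.dim S + vs.dim ?I0"
    using step3 step4 dU1 dU1I dU2 dU2I e1 e2 by linarith
  have key: "\<And>(a::int) (b::int) (c::int) (d::int) (e::int). a + 2*b \<le> c + d + e \<Longrightarrow> 2*(c - b) \<le> a - e \<Longrightarrow> c \<le> d"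
  proof -
    fix a b c d e :: int
    assume "a + 2*b \<le> c + d + e" "2*(c - b) \<le> a - e"
    moreover have "2*(c - b) = 2*c - 2*b" by (rule right_diff_distrib)
    ultimately show "c \<le> d" by linarith
  qed
  have A': "int (vs.dim ?K0) + 2 * int (vs.dim ?I1) \<le> int (vs.dim ?K1) + int (vs.dim S) + int (vs.dim ?I0)"
    using A by linarith
  have "int (vs.dim ?K1) \<le> int (vs.dim S)"
    by (rule key[OF A' ineq])
  hence le: "vs.dim ?K1 \<le> vs.dim S" by simp
  have SK: "S \<subseteq> ?K1" unfolding S_def by auto
  have "S = ?K1" using vs.dim_eq_subspace[OF finite_Mon K1sp SK sS] le by blast
  thus ?thesis using S_def by blast
qed


lemma sc_mult: "sc c p * q = sc c (p * q)"
  by (simp add: sc_def mult.assoc)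

lemma sc_sc: "sc a (sc b p) = sc (a * b) (p :: 'a::field poly3)"
  by (rule vs.scale_scale)

lemma sc_one: "sc 1 (p :: 'a::field poly3) = p"
  by (rule vs.scale_one)

lemma lookup_X: "Poly_Mapping.lookup X1 m = (if m = (1,0,0) then 1 else 0)"
  "Poly_Mapping.lookup X2 m = (if m = (0,1,0) then 1 else 0)"
  "Poly_Mapping.lookup X3 m = (if m = (0,0,1) then 1 else 0)"
  by (auto simp: X1_def X2_def X3_def lookup_single when_def)

lemma X_nz: "(X1 :: 'a::field poly3) \<noteq> 0" "(X2 :: 'a::field poly3) \<noteq> 0" "(X3 :: 'a::field poly3) \<noteq> 0"
  using lookup_X(1)[of "(1,0,0)"] lookup_X(2)[of "(0,1,0)"] lookup_X(3)[of "(0,0,1)"]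
  by (metis lookup_zero one_neq_zero)+

lemma lookup_linform:
  "Poly_Mapping.lookup (linform c) (1,0,0) = fst c"
  "Poly_Mapping.lookup (linform c) (0,1,0) = fst (snd c)"
  "Poly_Mapping.lookup (linform c) (0,0,1) = snd (snd c)"
  by (simp_all add: linform_def lookup_add lookup_sc lookup_X)

lemma linform_nz: "c \<noteq> 0 \<Longrightarrow> linform c \<noteq> (0 :: 'a::field poly3)"
proof
  assume "c \<noteq> 0" "linform c = (0 :: 'a poly3)"
  hence "fst c = 0" "fst (snd c) = 0" "snd (snd c) = 0"
    using lookup_linform[of c] by auto
  thus False using \<open>c \<noteq> 0\<close> by (cases c) (auto simp: zero_prod_def)
qed

lemma linform_mult: "linform c * a = sc (fst c) (X1 * a) + sc (fst (snd c)) (X2 * a) + sc (snd (snd c)) (X3 * a)"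
  by (simp add: linform_def distrib_right sc_mult)

lemma ideal_solve:
  assumes I: "is_ideal I" and "sc \<alpha> P + sc \<beta> Q + sc \<gamma> R \<in> I" "Q \<in> I" "R \<in> I" "\<alpha> \<noteq> (0::'a::field)"
  shows "P \<in> I"
proof -
  have "sc \<alpha> P \<in> I"
  proof -
    have "sc \<alpha> P = (sc \<alpha> P + sc \<beta> Q + sc \<gamma> R) - sc \<beta> Q - sc \<gamma> R" by simp
    thus ?thesis using assms by (metis ideal_diff ideal_sc)
  qed
  hence "sc (1/\<alpha>) (sc \<alpha> P) \<in> I" using ideal_sc[OF I] by blast
  thus ?thesis using assms(5) by (simp add: sc_sc sc_one)
qed

lemma socle_forms:
  fixes I :: "'a::field poly3 set"
  assumes I: "is_ideal I" and c: "c \<noteq> 0"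
  shows "\<exists>y z. y \<in> homog 1 \<and> y \<noteq> 0 \<and> z \<in> homog 1 \<and> z \<noteq> 0 \<and>
     (\<forall>a. linform c * a \<in> I \<longrightarrow> y * a \<in> I \<longrightarrow> z * a \<in> I \<longrightarrow> X1 * a \<in> I \<and> X2 * a \<in> I \<and> X3 * a \<in> I)"
proof -
  obtain c1 c2 c3 where cc: "c = (c1, c2, c3)" by (cases c)
  have Lm: "linform c * a = sc c1 (X1 * a) + sc c2 (X2 * a) + sc c3 (X3 * a)" for a
    using linform_mult[of c a] cc by simp
  have nz: "c1 \<noteq> 0 \<or> c2 \<noteq> 0 \<or> c3 \<noteq> 0" using c cc by (auto simp: zero_prod_def)
  show ?thesis
  proof (cases "c1 \<noteq> 0")
    case True
    show ?thesis
      by (rule exI[of _ X2], rule exI[of _ X3])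
         (use True X_homog X_nz in \<open>auto intro: ideal_solve[OF I, of c1 _ c2 _ c3] simp: Lm\<close>)
  next
    case F1: False
    show ?thesis
    proof (cases "c2 \<noteq> 0")
      case True
      have *: "X2 * a \<in> I" if "linform c * a \<in> I" "X1 * a \<in> I" "X3 * a \<in> I" for a
      proof -
        have "sc c2 (X2 * a) + sc c1 (X1 * a) + sc c3 (X3 * a) \<in> I" using that(1) by (simp add: Lm add.commute add.left_commute)
        thus ?thesis using ideal_solve[OF I _ that(2,3) True] by blast
      qed
      show ?thesis
        by (rule exI[of _ X1], rule exI[of _ X3]) (use * X_homog X_nz in auto)
    next
      case False
      hence T: "c3 \<noteq> 0" using F1 nz by auto
      have *: "X3 * a \<in> I" if "linform c * a \<in> I" "X1 * a \<in> I" "X2 * a \<in> I" for a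
      proof -
        have "sc c3 (X3 * a) + sc c1 (X1 * a) + sc c2 (X2 * a) \<in> I" using that(1) by (simp add: Lm add.commute add.left_commute)
        thus ?thesis using ideal_solve[OF I _ that(2,3) T] by blast
      qed
      show ?thesis
        by (rule exI[of _ X1], rule exI[of _ X2]) (use * X_homog X_nz in auto)
    qed
  qed
qed

lemma hfun_int: "int (hfun I j) = int (vs.dim (homog j :: 'a poly3 set)) - int (vs.dim (homog j \<inter> (I :: 'a::field poly3 set)))"
proof -
  have "vs.dim (homog j \<inter> I) \<le> vs.dim (homog j :: 'a poly3 set)"
    by (rule vs.dim_mono_fd[OF finite_Mon homog_span]) auto
  thus ?thesis by (simp add: hfun_def of_nat_diff)
qed

lemma hfun_zero_sub:
  assumes I: "is_ideal I" and h: "hfun I j = 0"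
  shows "homog j \<subseteq> (I :: 'a::field poly3 set)"
proof -
  have "vs.dim (homog j :: 'a poly3 set) \<le> vs.dim (homog j \<inter> I)"
    using h hfun_int[of I j] by simp
  hence "homog j \<inter> I = homog j"
    by (intro vs.dim_eq_subspace[OF finite_Mon homog_span]) (auto intro: vs.subspace_inter subspace_homog subspace_ideal[OF I])
  thus ?thesis by auto
qed

lemma hfun_nz_not_sub:
  assumes "hfun I j \<noteq> 0"
  shows "\<not> homog j \<subseteq> (I :: 'a::field poly3 set)"
proof
  assume "homog j \<subseteq> I"
  hence "homog j \<inter> I = homog j" by auto
  thus False using assms by (simp add: hfun_def)
qed

lemma level_socle:
  fixes I :: "'a::field poly3 set"
  assumes I: "is_ideal I" and lev: "level I" and hs: "hfun I s \<noteq> 0" and hs1: "hfun I (Suc s) = 0"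
    and a: "a \<in> homog j" "j \<noteq> s" "X1 * a \<in> I" "X2 * a \<in> I" "X3 * a \<in> I"
  shows "a \<in> I"
proof -
  obtain t where t: "\<And>f. X1 * f \<in> I \<Longrightarrow> X2 * f \<in> I \<Longrightarrow> X3 * f \<in> I \<Longrightarrow> f - hcomp t f \<in> I"
    using lev unfolding level_def by blast
  obtain f where f: "f \<in> homog s" "f \<notin> I" using hfun_nz_not_sub[OF hs] by auto
  have sub: "homog (Suc s) \<subseteq> I" by (rule hfun_zero_sub[OF I hs1])
  have "X1 * f \<in> I" "X2 * f \<in> I" "X3 * f \<in> I"
    using homog_mult[OF X_homog(1) f(1)] homog_mult[OF X_homog(2) f(1)] homog_mult[OF X_homog(3) f(1)] sub
    by auto
  hence "f - hcomp t f \<in> I" by (rule t)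
  have ts: "t = s"
  proof (rule ccontr)
    assume "t \<noteq> s"
    hence "hcomp t f = 0" using hcomp_other[OF f(1)] by auto
    thus False using \<open>f - hcomp t f \<in> I\<close> f(2) by simp
  qed
  have "a - hcomp t a \<in> I" using t a(3-5) by blast
  moreover have "hcomp t a = 0" using hcomp_other[OF a(1)] a(2) ts by auto
  ultimately show ?thesis by simp
qed

definition Qset :: "'a::field poly3 set \<Rightarrow> 'a poly3 \<Rightarrow> 'a poly3 set" where
  "Qset I L = {i + L * r |i r. i \<in> I}"

lemma Qset_add: "is_ideal I \<Longrightarrow> p \<in> Qset I L \<Longrightarrow> q \<in> Qset I L \<Longrightarrow> p + q \<in> Qset I L"
  unfolding Qset_def
proof clarify
  fix i r i' r' assume "is_ideal I" "i \<in> I" "i' \<in> I"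
  thus "\<exists>i'' r''. i + L * r + (i' + L * r') = i'' + L * r'' \<and> i'' \<in> I"
    by (intro exI[of _ "i + i'"] exI[of _ "r + r'"]) (auto simp: algebra_simps intro: ideal_add)
qed

lemma Qset_mult: "is_ideal I \<Longrightarrow> p \<in> Qset I L \<Longrightarrow> q * p \<in> Qset I L"
  unfolding Qset_def
proof clarify
  fix i r assume "is_ideal I" "i \<in> I"
  have "q * (i + L * r) = q * i + L * (q * r)" by (simp add: algebra_simps)
  moreover have "q * i \<in> I" using \<open>is_ideal I\<close> \<open>i \<in> I\<close> by (rule ideal_mult)
  ultimately show "\<exists>i'' r''. q * (i + L * r) = i'' + L * r'' \<and> i'' \<in> I" by blast
qed

lemma Qset_zero: "is_ideal I \<Longrightarrow> 0 \<in> Qset I L"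
  unfolding Qset_def by (auto intro!: exI[of _ 0] ideal_zero)

lemma Qset_sum: "is_ideal I \<Longrightarrow> (\<And>x. x \<in> S \<Longrightarrow> f x \<in> Qset I L) \<Longrightarrow> sum f S \<in> Qset I L"
  by (induction S rule: infinite_finite_induct) (auto intro: Qset_add Qset_zero)

lemma single_split:
  assumes "mdeg m = Suc j"
  shows "\<exists>x m'. x \<in> {X1, X2, X3} \<and> mdeg m' = j \<and> Poly_Mapping.single m a = x * Poly_Mapping.single m' (a::'a::field)"
proof -
  obtain m1 m2 m3 where m: "m = (m1, m2, m3)" by (cases m)
  show ?thesis
  proof (cases "m1 > 0")
    case True
    show ?thesis
      by (rule exI[of _ X1], rule exI[of _ "(m1 - 1, m2, m3)"])
         (use True assms m in \<open>auto simp: X1_def mult_single mdeg_def\<close>)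
  next
    case F1: False
    show ?thesis
    proof (cases "m2 > 0")
      case True
      show ?thesis
        by (rule exI[of _ X2], rule exI[of _ "(m1, m2 - 1, m3)"])
           (use True F1 assms m in \<open>auto simp: X2_def mult_single mdeg_def\<close>)
    next
      case False
      hence "m3 > 0" using F1 assms m by (auto simp: mdeg_def)
      thus ?thesis
        by (intro exI[of _ X3] exI[of _ "(m1, m2, m3 - 1)"])
           (use False F1 assms m in \<open>auto simp: X3_def mult_single mdeg_def\<close>)
    qed
  qed
qed

lemma qv_mono:
  assumes I: "is_ideal I" and qv: "quot_vanishes I L j"
  shows "quot_vanishes I L (Suc j)"
proof -
  have H: "homog j \<subseteq> Qset I L" using qv by (simp add: quot_vanishes_def Qset_def)
  have "homog (Suc j) \<subseteq> Qset I L"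
  proof
    fix p :: "'a poly3" assume p: "p \<in> homog (Suc j)"
    have "(\<Sum>m\<in>Poly_Mapping.keys p. Poly_Mapping.single m (Poly_Mapping.lookup p m)) \<in> Qset I L"
    proof (rule Qset_sum[OF I])
      fix m assume "m \<in> Poly_Mapping.keys p"
      hence "mdeg m = Suc j" using p by (auto simp: homog_def)
      then obtain x m' where xm: "x \<in> {X1, X2, X3}" "mdeg m' = j"
        "Poly_Mapping.single m (Poly_Mapping.lookup p m) = x * Poly_Mapping.single m' (Poly_Mapping.lookup p m)"
        using single_split by blast
      have "Poly_Mapping.single m' (Poly_Mapping.lookup p m) \<in> homog j" using xm(2) by (auto simp: homog_def)
      hence "Poly_Mapping.single m' (Poly_Mapping.lookup p m) \<in> Qset I L" using H by auto
      thus "Poly_Mapping.single m (Poly_Mapping.lookup p m) \<in> Qset I L" using xm(3) Qset_mult[OF I] by simp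
    qed
    thus "p \<in> Qset I L" using poly_expand[of p] by simp
  qed
  thus ?thesis by (simp add: quot_vanishes_def Qset_def)
qed

lemma qv_mono_le:
  assumes I: "is_ideal I" and qv: "quot_vanishes I L j" and "j \<le> k"
  shows "quot_vanishes I L k"
  using assms(3) by (induction k rule: dec_induct) (auto intro: qv qv_mono[OF I])

lemma qv_surj:
  assumes hI: "homogeneous_ideal I" and L: "L \<in> homog 1" and qv: "quot_vanishes I L (Suc j)"
  shows "homog (Suc j) \<subseteq> {u + i |u i. u \<in> (\<lambda>p. L * p) ` homog j \<and> i \<in> I}"
proof
  fix p :: "'a poly3" assume p: "p \<in> homog (Suc j)"
  then obtain i r where ir: "p = i + L * r" "i \<in> I" using qv by (auto simp: quot_vanishes_def)
  have "p = hcomp (Suc j) p" using hcomp_self[OF p] by simp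
  also have "\<dots> = hcomp (Suc j) i + hcomp (1 + j) (L * r)" using ir by (simp add: hcomp_add)
  also have "\<dots> = hcomp (Suc j) i + L * hcomp j r" using hcomp_mult_homog[OF L] by simp
  finally have "p = L * hcomp j r + hcomp (Suc j) i" by simp
  moreover have "hcomp (Suc j) i \<in> I" using hI ir(2) by (simp add: homogeneous_ideal_def)
  moreover have "L * hcomp j r \<in> (\<lambda>p. L * p) ` homog j" using hcomp_homog by blast
  ultimately show "p \<in> {u + i |u i. u \<in> (\<lambda>p. L * p) ` homog j \<and> i \<in> I}" by blast
qed


lemma arith_F:
  fixes a a' b b' e e' k k1 ha hb he :: int
  assumes "a + b' \<le> b + k1" "b + e' = e + k" "ha = a - a'" "hb = b - b'" "he = e - e'"
    "ha - hb = 2 * (hb - he)"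
  shows "2 * (k - b') \<le> k1 - a'"
proof -
  have x: "ha - hb = 2 * hb - 2 * he" using assms(6) by (simp only: right_diff_distrib)
  have y: "2 * (k - b') = 2 * k - 2 * b'" by (rule right_diff_distrib)
  show ?thesis unfolding y using assms(1-5) x by linarith
qed

lemma main_alg:
  fixes I :: "'a::field poly3 set"
  assumes hI: "homogeneous_ideal I" and lev: "level I" and hs: "hfun I s \<noteq> 0" and hs1: "hfun I (Suc s) = 0"
    and c: "c \<noteq> 0" and qv: "quot_vanishes I (linform c) (Suc (Suc j))" and js: "Suc j < s"
    and eq: "int (hfun I j) - int (hfun I (Suc j)) = 2 * (int (hfun I (Suc j)) - int (hfun I (Suc (Suc j))))"
    and pos: "int (hfun I (Suc j)) - int (hfun I (Suc (Suc j))) > 0"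
  shows False
proof -
  have I: "is_ideal I" using hI by (simp add: homogeneous_ideal_def)
  define L where "L = (linform c :: 'a poly3)"
  have L: "L \<in> homog 1" "L \<noteq> 0" using linform_homog[of c] linform_nz[OF c] unfolding L_def by auto
  have sI: "vs.subspace I" by (rule subspace_ideal[OF I])
  let ?g = "\<lambda>p. L * p"
  let ?H = "\<lambda>i. homog i :: 'a poly3 set"
  define U where "U = ?g ` ?H j"
  have UH: "U \<subseteq> ?H (Suc j)" unfolding U_def using homog_mult[OF L(1)] by auto
  have sU: "vs.subspace U" unfolding U_def by (rule mult_image_subspace[OF subspace_homog])
  have dU: "vs.dim U = vs.dim (?H j)" unfolding U_def by (rule dim_mult_image(1)[OF L(2) finite_Mon homog_span])
  have UI: "U \<inter> I = ?g ` Kset I L j" unfolding U_def Kset_def by auto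
  have dUI: "vs.dim (U \<inter> I) = vs.dim (Kset I L j)" unfolding UI
    by (rule dim_mult_image(1)[OF L(2) finite_Mon span_sub[OF Kset_homog]])
  have s1: "vs.dim U + vs.dim (?H (Suc j) \<inter> I) \<le> vs.dim (?H (Suc j)) + vs.dim (U \<inter> I)"
    by (rule vs.dim_rel_le(1)[OF finite_Mon homog_span UH sU subspace_homog sI])
  define U' where "U' = ?g ` ?H (Suc j)"
  have UH': "U' \<subseteq> ?H (Suc (Suc j))" unfolding U'_def using homog_mult[OF L(1)] by auto
  have sU': "vs.subspace U'" unfolding U'_def by (rule mult_image_subspace[OF subspace_homog])
  have dU': "vs.dim U' = vs.dim (?H (Suc j))" unfolding U'_def by (rule dim_mult_image(1)[OF L(2) finite_Mon homog_span])
  have UI': "U' \<inter> I = ?g ` Kset I L (Suc j)" unfolding U'_def Kset_def by auto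
  have dUI': "vs.dim (U' \<inter> I) = vs.dim (Kset I L (Suc j))" unfolding UI'
    by (rule dim_mult_image(1)[OF L(2) finite_Mon span_sub[OF Kset_homog]])
  have surj: "?H (Suc (Suc j)) \<subseteq> {u + i |u i. u \<in> U' \<and> i \<in> I}"
    using qv_surj[OF hI L(1) qv[folded L_def]] unfolding U'_def .
  have s2: "vs.dim U' + vs.dim (?H (Suc (Suc j)) \<inter> I) = vs.dim (?H (Suc (Suc j))) + vs.dim (U' \<inter> I)"
    by (rule vs.dim_rel_le(2)[OF finite_Mon homog_span UH' sU' subspace_homog sI surj])
  have ineq: "2 * (int (vs.dim (Kset I L (Suc j))) - int (vs.dim (?H (Suc j) \<inter> I)))
                 \<le> int (vs.dim (Kset I L j)) - int (vs.dim (?H j \<inter> I))"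
  proof -
    have a: "int (vs.dim (?H j)) + int (vs.dim (?H (Suc j) \<inter> I)) \<le> int (vs.dim (?H (Suc j))) + int (vs.dim (Kset I L j))"
      using s1 dU dUI by linarith
    have b: "int (vs.dim (?H (Suc j))) + int (vs.dim (?H (Suc (Suc j)) \<inter> I)) = int (vs.dim (?H (Suc (Suc j)))) + int (vs.dim (Kset I L (Suc j)))"
      using s2 dU' dUI' by linarith
    show ?thesis by (rule arith_F[OF a b hfun_int[of I j] hfun_int[of I "Suc j"] hfun_int[of I "Suc (Suc j)"] eq])
  qed
  obtain y z where yz: "y \<in> homog 1" "y \<noteq> 0" "z \<in> homog 1" "z \<noteq> 0"
    and soc: "\<And>a. L * a \<in> I \<Longrightarrow> y * a \<in> I \<Longrightarrow> z * a \<in> I \<Longrightarrow> X1 * a \<in> I \<and> X2 * a \<in> I \<and> X3 * a \<in> I"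
    using socle_forms[OF I c] unfolding L_def[symmetric] by blast
  have socI: "a \<in> I" if "a \<in> homog i" "i \<noteq> s" "L * a \<in> I" "y * a \<in> I" "z * a \<in> I" for a i
    using level_socle[OF I lev hs hs1 that(1,2)] soc[OF that(3-5)] by blast
  have Y: "\<forall>b\<in>Kset I L (Suc j). y * b \<in> I"
    by (rule yz_step[OF I L(1) yz _ ineq]) (use socI js in auto)
  have Z: "\<forall>b\<in>Kset I L (Suc j). z * b \<in> I"
    by (rule yz_step[OF I L(1) yz(3,4) yz(1,2) _ ineq]) (use socI js in auto)
  have "Kset I L (Suc j) \<subseteq> I"
  proof
    fix b assume b: "b \<in> Kset I L (Suc j)"
    show "b \<in> I" using socI[of b "Suc j"] b Y Z js unfolding Kset_def by auto
  qed
  hence "Kset I L (Suc j) = ?H (Suc j) \<inter> I" using Kset_inter[OF I, of L "Suc j"] by auto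
  hence "vs.dim (Kset I L (Suc j)) = vs.dim (?H (Suc j) \<inter> I)" by simp
  moreover have "int (vs.dim (?H (Suc j))) + int (vs.dim (?H (Suc (Suc j)) \<inter> I)) = int (vs.dim (?H (Suc (Suc j)))) + int (vs.dim (Kset I L (Suc j)))"
    using s2 dU' dUI' by linarith
  ultimately show False using pos hfun_int[of I "Suc j"] hfun_int[of I "Suc (Suc j)"] by linarith
qed


definition mev :: "mono3 \<Rightarrow> 'a::field \<times> 'a \<times> 'a \<Rightarrow> 'a" where
  "mev m c = fst c ^ fst m * fst (snd c) ^ fst (snd m) * snd (snd c) ^ snd (snd m)"

lemma peval_mev: "peval F c = (\<Sum>m\<in>Poly_Mapping.keys F. Poly_Mapping.lookup F m * mev m c)"
  unfolding peval_def mev_def by (simp add: mult.assoc)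

lemma peval_superset:
  assumes "finite S" "Poly_Mapping.keys F \<subseteq> S"
  shows "peval F c = (\<Sum>m\<in>S. Poly_Mapping.lookup F m * mev m c)"
  unfolding peval_mev by (rule sum.mono_neutral_left) (use assms in \<open>auto simp: in_keys_iff\<close>)

lemma peval_zero[simp]: "peval 0 c = 0"
  by (simp add: peval_def)

lemma peval_add: "peval (p + q) c = peval p c + peval q c"
proof -
  let ?S = "Poly_Mapping.keys p \<union> Poly_Mapping.keys q"
  have "peval (p + q) c = (\<Sum>m\<in>?S. Poly_Mapping.lookup (p + q) m * mev m c)"
    by (rule peval_superset) (auto simp: keys_add[of p q, THEN subset_trans])
  also have "\<dots> = (\<Sum>m\<in>?S. Poly_Mapping.lookup p m * mev m c) + (\<Sum>m\<in>?S. Poly_Mapping.lookup q m * mev m c)"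
    by (simp add: lookup_add distrib_right sum.distrib)
  also have "\<dots> = peval p c + peval q c"
    by (simp add: peval_superset[symmetric])
  finally show ?thesis .
qed

lemma peval_sum: "peval (sum f S) c = (\<Sum>x\<in>S. peval (f x) c)"
  by (induction S rule: infinite_finite_induct) (auto simp: peval_add)

lemma peval_single: "peval (Poly_Mapping.single m a) c = a * mev m c"
proof -
  have "peval (Poly_Mapping.single m a) c = (\<Sum>m'\<in>{m}. Poly_Mapping.lookup (Poly_Mapping.single m a) m' * mev m' c)"
    by (rule peval_superset) auto
  thus ?thesis by simp
qed

lemma mev_add: "mev (a + b) c = mev a c * mev b c"
  by (cases a; cases b) (simp add: mev_def power_add algebra_simps)

lemma mev_zero: "mev 0 c = 1"
  by (simp add: mev_def zero_prod_def)

lemma peval_mult: "peval (p * q) c = peval p c * peval q c"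
proof -
  have pq: "p * q = (\<Sum>a\<in>Poly_Mapping.keys p. \<Sum>b\<in>Poly_Mapping.keys q.
      Poly_Mapping.single (a + b) (Poly_Mapping.lookup p a * Poly_Mapping.lookup q b))"
    by (subst poly_expand[of p], subst poly_expand[of q])
       (simp add: sum_distrib_left sum_distrib_right mult_single, rule sum.swap)
  show ?thesis
    unfolding pq peval_sum peval_single mev_add
    by (simp add: peval_mev sum_distrib_left sum_distrib_right algebra_simps) (subst sum.swap, simp add: algebra_simps)
qed

lemma peval_one: "peval 1 c = 1"
proof -
  have "(1 :: 'a poly3) = Poly_Mapping.single 0 1" by simp
  hence "peval (1 :: 'a poly3) c = 1 * mev 0 c" by (metis peval_single)
  thus ?thesis by (simp add: mev_zero)
qed

lemma peval_hom: "comm_ring_hom (\<lambda>F. peval F (c :: 'a::field \<times> 'a \<times> 'a))"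
  by unfold_locales (simp_all add: peval_add peval_mult peval_one)

lemma peval_nonzero:
  fixes F :: "'a::field_char_0 poly3"
  assumes "F \<noteq> 0"
  shows "\<exists>c. peval F c \<noteq> 0"
proof -
  define B where "B = Suc (Max (insert 0 ((\<lambda>m. fst m + fst (snd m) + snd (snd m)) ` Poly_Mapping.keys F)))"
  have bnd: "fst m < B" "fst (snd m) < B" "snd (snd m) < B" if "m \<in> Poly_Mapping.keys F" for m
  proof -
    have "fst m + fst (snd m) + snd (snd m) \<le> Max (insert 0 ((\<lambda>m. fst m + fst (snd m) + snd (snd m)) ` Poly_Mapping.keys F))"
      using that by (intro Max_ge) auto
    thus "fst m < B" "fst (snd m) < B" "snd (snd m) < B" unfolding B_def by auto
  qed
  define e where "e m = fst m + B * fst (snd m) + B * B * snd (snd m)" for m :: mono3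
  have inj: "inj_on e (Poly_Mapping.keys F)"
  proof (rule inj_onI)
    fix m m' assume mm: "m \<in> Poly_Mapping.keys F" "m' \<in> Poly_Mapping.keys F" "e m = e m'"
    obtain a1 a2 a3 where m: "m = (a1, a2, a3)" by (cases m)
    obtain b1 b2 b3 where m': "m' = (b1, b2, b3)" by (cases m')
    have lt: "a1 < B" "a2 < B" "a3 < B" "b1 < B" "b2 < B" "b3 < B" using bnd[OF mm(1)] bnd[OF mm(2)] m m' by auto
    have E: "a1 + B * (a2 + B * a3) = b1 + B * (b2 + B * b3)" using mm(3) m m' by (simp add: e_def algebra_simps)
    have "a1 = b1" using arg_cong[OF E, of "\<lambda>x. x mod B"] lt by simp
    moreover have "a2 + B * a3 = b2 + B * b3" using arg_cong[OF E, of "\<lambda>x. x div B"] lt by simp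
    moreover have "a2 = b2" using arg_cong[OF calculation(2), of "\<lambda>x. x mod B"] lt by simp
    moreover have "a3 = b3" using arg_cong[OF calculation(2), of "\<lambda>x. x div B"] lt by simp
    ultimately show "m = m'" using m m' by simp
  qed
  define P where "P = (\<Sum>m\<in>Poly_Mapping.keys F. Polynomial.monom (Poly_Mapping.lookup F m) (e m))"
  have Pev: "poly P t = peval F (t, t ^ B, t ^ (B * B))" for t
    unfolding P_def peval_mev poly_sum poly_monom mev_def e_def
    by (intro sum.cong refl) (simp add: power_add power_mult algebra_simps)
  obtain m0 where m0: "m0 \<in> Poly_Mapping.keys F" using assms by (metis keys_eq_empty ex_in_conv)
  have "coeff P (e m0) = (\<Sum>m\<in>Poly_Mapping.keys F. if e m = e m0 then Poly_Mapping.lookup F m else 0)"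
    unfolding P_def coeff_sum coeff_monom by simp
  also have "\<dots> = (\<Sum>m\<in>Poly_Mapping.keys F. if m = m0 then Poly_Mapping.lookup F m else 0)"
    by (intro sum.cong refl) (use inj m0 in \<open>auto dest: inj_onD\<close>)
  also have "\<dots> = Poly_Mapping.lookup F m0" using m0 by simp
  finally have "coeff P (e m0) \<noteq> 0" using m0 by (simp add: in_keys_iff)
  hence "P \<noteq> 0" by auto
  hence "finite {t. poly P t = 0}" by (rule poly_roots_finite)
  moreover have "infinite (UNIV :: 'a set)" by (rule infinite_UNIV_char_0)
  ultimately obtain t where "poly P t \<noteq> 0" by (metis (mono_tags, lifting) UNIV_I ex_new_if_finite mem_Collect_eq)
  thus ?thesis using Pev by metis
qed

lemma general_unique:
  fixes P :: "'a::field_char_0 \<times> 'a \<times> 'a \<Rightarrow> bool"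
  assumes "general P" "general Q"
  shows "\<exists>c. P c \<and> Q c"
proof -
  obtain F G where F: "F \<noteq> 0" "\<And>c. peval F c \<noteq> 0 \<Longrightarrow> P c" and G: "G \<noteq> 0" "\<And>c. peval G c \<noteq> 0 \<Longrightarrow> Q c"
    using assms unfolding general_def by blast
  have "F * G \<noteq> 0" using F G by simp
  then obtain c where "peval (F * G) c \<noteq> 0" using peval_nonzero by blast
  hence "peval F c \<noteq> 0" "peval G c \<noteq> 0" by (auto simp: peval_mult)
  thus ?thesis using F(2) G(2) by blast
qed


lemma lookup_lin_mult: "Poly_Mapping.lookup (linform c * r) mo =
   fst c * Poly_Mapping.lookup (X1 * r) mo + fst (snd c) * Poly_Mapping.lookup (X2 * r) mo
   + snd (snd c) * Poly_Mapping.lookup (X3 * r) mo"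
  by (simp add: linform_mult lookup_add lookup_sc)

lemma mev_units: "mev (1,0,0) c = fst c" "mev (0,1,0) c = fst (snd c)" "mev (0,0,1) c = snd (snd c)"
  by (simp_all add: mev_def)

lemma solve_target:
  assumes A: "A \<in> carrier_mat n n" and dA: "det A \<noteq> (0::'a::field)" and k0: "k0 < n"
  shows "\<exists>x. \<forall>j<n. (\<Sum>k<n. A $$ (j,k) * x k) = (if j = k0 then 1 else 0)"
proof -
  have "A \<in> Units (ring_mat TYPE('a) n ())" by (rule det_non_zero_imp_unit[OF A dA])
  then obtain B where B: "B \<in> carrier_mat n n" "A * B = 1\<^sub>m n"
    unfolding Units_def by (auto simp: ring_mat_simps)
  define v where "v = B *\<^sub>v unit_vec n k0"
  have v: "v \<in> carrier_vec n" unfolding v_def using B(1) by auto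
  have Av: "A *\<^sub>v v = unit_vec n k0"
    unfolding v_def using assoc_mult_mat_vec[OF A B(1) unit_vec_carrier, symmetric] B(2) by simp
  show ?thesis
  proof (intro exI[of _ "\<lambda>k. v $ k"] allI impI)
    fix j assume j: "j < n"
    have "(A *\<^sub>v v) $ j = row A j \<bullet> v" using A j by simp
    also have "\<dots> = (\<Sum>k<n. A $$ (j,k) * v $ k)"
      unfolding scalar_prod_def using v A j by (simp add: atLeast0LessThan)
    finally show "(\<Sum>k<n. A $$ (j,k) * v $ k) = (if j = k0 then 1 else 0)"
      using Av j k0 by simp
  qed
qed

lemma general_qv:
  fixes I :: "'a::field poly3 set"
  assumes hI: "homogeneous_ideal I" and qv0: "quot_vanishes I (linform c0) (Suc m)"
  shows "\<exists>F. F \<noteq> 0 \<and> (\<forall>c. peval F c \<noteq> 0 \<longrightarrow> quot_vanishes I (linform c) (Suc m))"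
proof -
  have I: "is_ideal I" using hI by (simp add: homogeneous_ideal_def)
  let ?N = "Suc m"
  have "{mo. mdeg mo = ?N} \<subseteq> {0..?N} \<times> {0..?N} \<times> {0..?N}" by (auto simp: mdeg_def)
  hence "finite {mo. mdeg mo = ?N}" by (rule finite_subset) auto
  then obtain ms where ms: "distinct ms" "set ms = {mo. mdeg mo = ?N}"
    using finite_distinct_list by blast
  define n where "n = length ms"
  have msdeg: "mdeg (ms ! k) = ?N" if "k < n" for k using ms(2) that n_def nth_mem by blast
  have "\<forall>k\<in>{..<n}. \<exists>ir. fst ir \<in> I \<and> Poly_Mapping.single (ms ! k) (1::'a) = fst ir + linform c0 * snd ir"
  proof
    fix k assume "k \<in> {..<n}"
    hence "Poly_Mapping.single (ms ! k) (1::'a) \<in> homog ?N" using msdeg by (auto simp: homog_def)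
    thus "\<exists>ir. fst ir \<in> I \<and> Poly_Mapping.single (ms ! k) (1::'a) = fst ir + linform c0 * snd ir"
      using qv0 unfolding quot_vanishes_def by fastforce
  qed
  then obtain f where f: "\<And>k. k < n \<Longrightarrow> fst (f k) \<in> I \<and> Poly_Mapping.single (ms ! k) (1::'a) = fst (f k) + linform c0 * snd (f k)"
    using bchoice[of "{..<n}"] by (metis lessThan_iff)
  define ii where "ii k = fst (f k)" for k
  define rr where "rr k = snd (f k)" for k
  have iiI: "ii k \<in> I" if "k < n" for k using f[OF that] ii_def by simp
  have base: "Poly_Mapping.single (ms ! k) 1 = linform c0 * rr k + ii k" if "k < n" for k
    using f[OF that] ii_def rr_def by (simp add: add.commute)
  define E :: "nat \<Rightarrow> nat \<Rightarrow> 'a poly3" where "E j k = Poly_Mapping.single (1,0,0) (Poly_Mapping.lookup (X1 * rr k) (ms ! j))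
      + Poly_Mapping.single (0,1,0) (Poly_Mapping.lookup (X2 * rr k) (ms ! j))
      + Poly_Mapping.single (0,0,1) (Poly_Mapping.lookup (X3 * rr k) (ms ! j))
      + Poly_Mapping.single 0 (Poly_Mapping.lookup (ii k) (ms ! j))" for j k
  have pE: "peval (E j k) c = Poly_Mapping.lookup (linform c * rr k + ii k) (ms ! j)" for j k c
    unfolding E_def by (simp add: peval_add peval_single mev_def lookup_add lookup_lin_mult algebra_simps zero_prod_def)
  define M where "M = mat n n (\<lambda>(j,k). E j k)"
  define A where "A c = map_mat (\<lambda>e. peval e c) M" for c
  have Acar: "A c \<in> carrier_mat n n" for c unfolding A_def M_def by simp
  have Aent: "A c $$ (j,k) = Poly_Mapping.lookup (linform c * rr k + ii k) (ms ! j)" if "j < n" "k < n" for c j k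
    using that unfolding A_def M_def by (simp add: pE)
  have detA: "peval (det M) c = det (A c)" for c
  proof -
    interpret h: comm_ring_hom "\<lambda>F. peval F c" by (rule peval_hom)
    show ?thesis unfolding A_def by simp
  qed
  have "A c0 = 1\<^sub>m n"
  proof (rule eq_matI)
    fix j k assume jk: "j < dim_row (1\<^sub>m n :: 'a mat)" "k < dim_col (1\<^sub>m n :: 'a mat)"
    hence jk': "j < n" "k < n" by auto
    have "A c0 $$ (j,k) = Poly_Mapping.lookup (Poly_Mapping.single (ms ! k) 1) (ms ! j)"
      using Aent[OF jk'] base[OF jk'(2)] by simp
    also have "\<dots> = (if j = k then 1 else 0)"
      using ms(1) jk' n_def by (auto simp: lookup_single when_def nth_eq_iff_index_eq)
    finally show "A c0 $$ (j,k) = 1\<^sub>m n $$ (j,k)" using jk' by simp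
  qed (auto simp: Acar[THEN carrier_matD(1)] Acar[THEN carrier_matD(2)])
  hence "peval (det M) c0 = 1" using detA by simp
  hence F0: "det M \<noteq> 0" by auto
  have "quot_vanishes I (linform c) ?N" if nz: "peval (det M) c \<noteq> 0" for c
  proof -
    have dAc: "det (A c) \<noteq> 0" using nz detA by simp
    have targ: "Poly_Mapping.single (ms ! k0) 1 \<in> Qset I (linform c)" if k0: "k0 < n" for k0
    proof -
      obtain x where x: "\<And>j. j < n \<Longrightarrow> (\<Sum>k<n. A c $$ (j,k) * x k) = (if j = k0 then 1 else 0)"
        using solve_target[OF Acar dAc k0] by blast
      define R where "R = (\<Sum>k<n. sc (x k) (rr k))"
      define Ii where "Ii = (\<Sum>k<n. sc (x k) (ii k))"
      have IiI: "Ii \<in> I" unfolding Ii_def by (rule ideal_sum[OF I]) (auto intro: ideal_sc[OF I] iiI)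
      define w where "w = linform c * R + Ii"
      have w_eq: "w = (\<Sum>k<n. sc (x k) (linform c * rr k + ii k))"
        unfolding w_def R_def Ii_def by (simp add: sum_distrib_left sum.distrib sc_def algebra_simps)
      have lw: "Poly_Mapping.lookup w (ms ! j) = (if j = k0 then 1 else 0)" if j: "j < n" for j
      proof -
        have "Poly_Mapping.lookup w (ms ! j) = (\<Sum>k<n. x k * Poly_Mapping.lookup (linform c * rr k + ii k) (ms ! j))"
          unfolding w_eq by (simp add: lookup_sum lookup_sc)
        also have "\<dots> = (\<Sum>k<n. A c $$ (j,k) * x k)"
        proof (rule sum.cong[OF refl])
          fix k assume "k \<in> {..<n}"
          hence "A c $$ (j,k) = Poly_Mapping.lookup (linform c * rr k + ii k) (ms ! j)" using Aent[OF j, of k] by simp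
          thus "x k * Poly_Mapping.lookup (linform c * rr k + ii k) (ms ! j) = A c $$ (j,k) * x k"
            by (simp only: mult.commute)
        qed
        finally show ?thesis using x[OF j] by simp
      qed
      have hw: "hcomp ?N w = Poly_Mapping.single (ms ! k0) 1"
      proof (rule poly_mapping_eqI)
        fix mo
        show "Poly_Mapping.lookup (hcomp ?N w) mo = Poly_Mapping.lookup (Poly_Mapping.single (ms ! k0) 1) mo"
        proof (cases "mdeg mo = ?N")
          case True
          hence "mo \<in> set ms" using ms(2) by simp
          then obtain j where j: "j < n" "mo = ms ! j" unfolding n_def in_set_conv_nth by blast
          show ?thesis using lw[OF j(1)] j ms(1) k0 n_def True
            by (auto simp: lookup_hcomp lookup_single when_def nth_eq_iff_index_eq)
        next
          case False
          thus ?thesis using msdeg[OF k0] by (auto simp: lookup_hcomp lookup_single when_def)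
        qed
      qed
      have "hcomp ?N w = hcomp (1 + m) (linform c * R) + hcomp ?N Ii" unfolding w_def by (simp add: hcomp_add)
      also have "\<dots> = linform c * hcomp m R + hcomp ?N Ii" using hcomp_mult_homog[OF linform_homog] by simp
      finally have "Poly_Mapping.single (ms ! k0) 1 = hcomp ?N Ii + linform c * hcomp m R" using hw by simp
      moreover have "hcomp ?N Ii \<in> I" using hI IiI by (simp add: homogeneous_ideal_def)
      ultimately show ?thesis unfolding Qset_def by blast
    qed
    have "homog ?N \<subseteq> Qset I (linform c)"
    proof
      fix p :: "'a poly3" assume p: "p \<in> homog ?N"
      have "(\<Sum>mo\<in>Poly_Mapping.keys p. Poly_Mapping.single 0 (Poly_Mapping.lookup p mo) * Poly_Mapping.single mo 1) \<in> Qset I (linform c)"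
      proof (rule Qset_sum[OF I], rule Qset_mult[OF I])
        fix mo assume "mo \<in> Poly_Mapping.keys p"
        hence "mdeg mo = ?N" using p by (auto simp: homog_def)
        hence "mo \<in> set ms" using ms(2) by simp
        then obtain k0 where "k0 < n" "mo = ms ! k0" unfolding n_def in_set_conv_nth by blast
        thus "Poly_Mapping.single mo 1 \<in> Qset I (linform c)" using targ by simp
      qed
      moreover have "(\<Sum>mo\<in>Poly_Mapping.keys p. Poly_Mapping.single 0 (Poly_Mapping.lookup p mo) * Poly_Mapping.single mo 1) = p"
        by (subst (3) poly_expand) (simp add: mult_single)
      ultimately show "p \<in> Qset I (linform c)" by simp
    qed
    thus ?thesis by (simp add: quot_vanishes_def Qset_def)
  qed
  thus ?thesis using F0 by blast
qed


lemma qv_exists: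
  fixes I :: "'a::field poly3 set"
  assumes I: "is_ideal I" and art: "artinian I"
  shows "\<exists>l. quot_vanishes I L (Suc l)"
proof -
  obtain N where N: "\<And>j. j \<ge> N \<Longrightarrow> homog j \<subseteq> I" using art unfolding artinian_def by blast
  have "homog (Suc N) \<subseteq> {i + L * r |i r. i \<in> I}"
  proof
    fix p :: "'a poly3" assume p: "p \<in> homog (Suc N)"
    have NN: "homog (Suc N) \<subseteq> I" by (rule N) simp
    have pI: "p \<in> I" using NN p by (rule subsetD)
    show "p \<in> {i + L * r |i r. i \<in> I}"
    proof (rule CollectI, rule exI[of _ p], rule exI[of _ 0], rule conjI)
      show "p = p + L * 0" by simp
      show "p \<in> I" by (rule pI)
    qed
  qed
  thus ?thesis unfolding quot_vanishes_def by (rule exI[of _ N])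
qed

lemma rL_spec:
  assumes I: "is_ideal I" and art: "artinian I"
  shows "quot_vanishes I (linform c) (Suc (rL I c))"
  unfolding rL_def by (rule LeastI_ex) (rule qv_exists[OF I art])

lemma r1_exists:
  fixes I :: "'a::field_char_0 poly3 set"
  assumes hI: "homogeneous_ideal I" and art: "artinian I"
  shows "\<exists>c. rL I c = r1 I"
proof -
  have I: "is_ideal I" using hI by (simp add: homogeneous_ideal_def)
  define m where "m = (LEAST v. \<exists>c. rL I c = v)"
  have ex: "\<exists>v. \<exists>c. rL I c = v" by blast
  obtain c0 where c0: "rL I c0 = m" using LeastI_ex[OF ex] unfolding m_def by blast
  have mmin: "m \<le> rL I c" for c unfolding m_def by (rule Least_le) (rule exI[of _ c], rule refl)
  have qv0: "quot_vanishes I (linform c0) (Suc m)" using rL_spec[OF I art, of c0] c0 by simp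
  obtain F where F: "F \<noteq> 0" "\<And>c. peval F c \<noteq> 0 \<Longrightarrow> quot_vanishes I (linform c) (Suc m)"
    using general_qv[OF hI qv0] by blast
  have gen: "general (\<lambda>c. rL I c = m)"
    unfolding general_def
  proof (intro exI[of _ F] conjI allI impI)
    show "F \<noteq> 0" by fact
    fix c assume "peval F c \<noteq> 0"
    hence "quot_vanishes I (linform c) (Suc m)" by (rule F(2))
    hence "rL I c \<le> m" unfolding rL_def by (rule Least_le)
    thus "rL I c = m" using mmin[of c] by simp
  qed
  have uniq: "r = m" if g: "general (\<lambda>c. rL I c = r)" for r
  proof -
    obtain c where "rL I c = r" "rL I c = m" using general_unique[OF g gen] by blast
    thus "r = m" by simp
  qed
  have r1m: "r1 I = m" unfolding r1_def by (rule the_equality) (rule gen, rule uniq)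
  show ?thesis by (rule exI[of _ c0]) (simp only: c0 r1m)
qed

lemma linform_zero: "linform (0 :: 'a::field \<times> 'a \<times> 'a) = 0"
  by (simp add: linform_def sc_def zero_prod_def)

theorem corollary3p20:
  fixes I :: "'a::field_char_0 poly3 set" and s :: nat
  assumes "homogeneous_ideal I"
    and "artinian I"
    and "hfun I 0 = 1" and "hfun I 1 = 3"
    and "hfun I s \<noteq> 0" and "\<forall>j>s. hfun I j = 0"
    and "\<exists>d. r1 I < d \<and> d < s \<and>
           int (hfun I (d - 1)) - int (hfun I d) = 2 * (int (hfun I d) - int (hfun I (d + 1)))
           \<and> int (hfun I d) - int (hfun I (d + 1)) > 0"
  shows "\<not> level I"
proof
  assume lev: "level I"
  have hI: "homogeneous_ideal I" by (rule assms(1))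
  have art: "artinian I" by (rule assms(2))
  have hs: "hfun I s \<noteq> 0" by (rule assms(5))
  have I: "is_ideal I" using hI by (simp add: homogeneous_ideal_def)
  have hs1: "hfun I (Suc s) = 0" using assms(6) by simp
  obtain d where d: "r1 I < d" "d < s"
    "int (hfun I (d - 1)) - int (hfun I d) = 2 * (int (hfun I d) - int (hfun I (d + 1)))"
    "int (hfun I d) - int (hfun I (d + 1)) > 0" using assms(7) by blast
  obtain j where dj: "d = Suc j" using d(1) by (cases d) auto
  obtain c where c: "rL I c = r1 I" using r1_exists[OF hI art] by blast
  have qv: "quot_vanishes I (linform c) (Suc (Suc j))"
  proof (rule qv_mono_le[OF I rL_spec[OF I art, of c]])
    have "rL I c < Suc j" using c d(1) dj by simp
    thus "Suc (rL I c) \<le> Suc (Suc j)" by simp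
  qed
  have cnz: "c \<noteq> 0"
  proof
    assume "c = 0"
    hence "linform c = (0 :: 'a poly3)" using linform_zero by simp
    hence "quot_vanishes I 0 (Suc (Suc j))" using qv by simp
    moreover have "Suc (Suc j) \<le> s" using d(2) dj by simp
    ultimately have "quot_vanishes I 0 s" by (rule qv_mono_le[OF I])
    hence "homog s \<subseteq> I" unfolding quot_vanishes_def by auto
    thus False using hfun_nz_not_sub[OF hs] by blast
  qed
  have js: "Suc j < s" using d(2) dj by simp
  have e1: "int (hfun I j) - int (hfun I (Suc j)) = 2 * (int (hfun I (Suc j)) - int (hfun I (Suc (Suc j))))"
    using d(3) unfolding dj by (simp only: diff_Suc_1 Suc_eq_plus1[symmetric])
  have e2: "int (hfun I (Suc j)) - int (hfun I (Suc (Suc j))) > 0"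
    using d(4) unfolding dj by (simp only: Suc_eq_plus1[symmetric])
  show False
    by (rule main_alg[OF hI lev hs hs1 cnz qv js e1 e2])
qed


end
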